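(* Let $G$ be a connected graph, let $L$ be a list-assignment with $|L(u)|\ge\deg(u)+1$ for all $u\in V(G)$, and let $\alpha,\beta$ be two unfrozen $L$-colourings. For each vertex $w$, there exists a recolouring sequence $\mathcal{S}$ from $\alpha$ to some $L$-colouring $\gamma$ such that (i) either $\gamma(w)=\beta(w)$, or there is precisely one vertex $x\in N(w)$ with $\gamma(x)=\beta(w)$ and both $w$ and $x$ are frozen under $\gamma$; and (ii) $|\mathcal{S}|\le\deg(w)+2$, with equality only if $\gamma(w)=\beta(w)$.
   Context: An $L$-colouring is a proper colouring $\varphi$ with $\varphi(v)\in L(v)$ for all $v$. A recolouring sequence is a sequence of single-vertex recolouring steps, each changing the colour of one vertex to another colour of its list so that the colouring remains proper; $|\mathcal{S}|$ is its number of steps. A vertex $u$ is frozen under $\varphi$ if every colour of $L(u)\setminus\{\varphi(u)\}$ appears on a neighbour of $u$; a colouring is unfrozen if at least one vertex is unfrozen under it. *)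

theory Defs
  imports Main
begin

definition simple_graph :: "'v set \<Rightarrow> ('v \<Rightarrow> 'v \<Rightarrow> bool) \<Rightarrow> bool" where
  "simple_graph V E \<longleftrightarrow> finite V \<and>
     (\<forall>u v. E u v \<longrightarrow> u \<in> V \<and> v \<in> V \<and> u \<noteq> v \<and> E v u)"

definition connected_graph :: "'v set \<Rightarrow> ('v \<Rightarrow> 'v \<Rightarrow> bool) \<Rightarrow> bool" where
  "connected_graph V E \<longleftrightarrow> (\<forall>u\<in>V. \<forall>v\<in>V. E\<^sup>*\<^sup>* u v)"

definition nbrs :: "'v set \<Rightarrow> ('v \<Rightarrow> 'v \<Rightarrow> bool) \<Rightarrow> 'v \<Rightarrow> 'v set" where
  "nbrs V E u = {v \<in> V. E u v}"

definition deg :: "'v set \<Rightarrow> ('v \<Rightarrow> 'v \<Rightarrow> bool) \<Rightarrow> 'v \<Rightarrow> nat" where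
  "deg V E u = card (nbrs V E u)"

definition L_colouring :: "'v set \<Rightarrow> ('v \<Rightarrow> 'v \<Rightarrow> bool) \<Rightarrow> ('v \<Rightarrow> 'c set) \<Rightarrow> ('v \<Rightarrow> 'c) \<Rightarrow> bool" where
  "L_colouring V E L \<phi> \<longleftrightarrow> (\<forall>v\<in>V. \<phi> v \<in> L v) \<and> (\<forall>u\<in>V. \<forall>v\<in>V. E u v \<longrightarrow> \<phi> u \<noteq> \<phi> v)"

definition recol_step :: "'v set \<Rightarrow> ('v \<Rightarrow> 'v \<Rightarrow> bool) \<Rightarrow> ('v \<Rightarrow> 'c set) \<Rightarrow> ('v \<Rightarrow> 'c) \<Rightarrow> ('v \<Rightarrow> 'c) \<Rightarrow> bool" where
  "recol_step V E L \<phi> \<psi> \<longleftrightarrow> (\<exists>v\<in>V. \<exists>c\<in>L v. c \<noteq> \<phi> v \<and> \<psi> = \<phi>(v := c)) \<and> L_colouring V E L \<psi>"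

inductive recol_seq :: "'v set \<Rightarrow> ('v \<Rightarrow> 'v \<Rightarrow> bool) \<Rightarrow> ('v \<Rightarrow> 'c set) \<Rightarrow> ('v \<Rightarrow> 'c) \<Rightarrow> ('v \<Rightarrow> 'c) \<Rightarrow> nat \<Rightarrow> bool"
  for V E L where
  refl: "L_colouring V E L \<phi> \<Longrightarrow> recol_seq V E L \<phi> \<phi> 0"
| step: "recol_seq V E L \<phi> \<psi> n \<Longrightarrow> recol_step V E L \<psi> \<chi> \<Longrightarrow> recol_seq V E L \<phi> \<chi> (Suc n)"

definition frozen :: "'v set \<Rightarrow> ('v \<Rightarrow> 'v \<Rightarrow> bool) \<Rightarrow> ('v \<Rightarrow> 'c set) \<Rightarrow> ('v \<Rightarrow> 'c) \<Rightarrow> 'v \<Rightarrow> bool" where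
  "frozen V E L \<phi> u \<longleftrightarrow> (\<forall>c \<in> L u - {\<phi> u}. \<exists>x \<in> nbrs V E u. \<phi> x = c)"

definition unfrozen_colouring :: "'v set \<Rightarrow> ('v \<Rightarrow> 'v \<Rightarrow> bool) \<Rightarrow> ('v \<Rightarrow> 'c set) \<Rightarrow> ('v \<Rightarrow> 'c) \<Rightarrow> bool" where
  "unfrozen_colouring V E L \<phi> \<longleftrightarrow> (\<exists>u\<in>V. \<not> frozen V E L \<phi> u)"

end

theory Submission
  imports Defs
begin

lemma recol_seq_end: "recol_seq V E L \<phi> \<psi> n \<Longrightarrow> L_colouring V E L \<psi>"
  by (induction rule: recol_seq.induct) (auto simp: recol_step_def)

lemma recol_seq_prepend:
  "recol_seq V E L \<phi>' \<gamma> n \<Longrightarrow> recol_step V E L \<phi> \<phi>' \<Longrightarrow> L_colouring V E L \<phi>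
   \<Longrightarrow> recol_seq V E L \<phi> \<gamma> (Suc n)"
proof (induction rule: recol_seq.induct)
  case (refl \<phi>')
  then show ?case by (meson recol_seq.refl recol_seq.step)
next
  case (step \<phi>' \<psi> n \<chi>)
  then show ?case by (meson recol_seq.step)
qed

lemma step_intro:
  "v \<in> V \<Longrightarrow> c \<in> L v \<Longrightarrow> c \<noteq> \<phi> v \<Longrightarrow> L_colouring V E L (\<phi>(v := c))
   \<Longrightarrow> recol_step V E L \<phi> (\<phi>(v := c))"
  unfolding recol_step_def by blast

lemma frozen_props:
  assumes sg: "simple_graph V E" and uV: "u \<in> V" and fin: "finite (L u)"
    and cd: "card (L u) \<ge> deg V E u + 1" and inL: "\<phi> u \<in> L u"
    and fr: "frozen V E L \<phi> u"
  shows "\<phi> ` nbrs V E u = L u - {\<phi> u}" and "inj_on \<phi> (nbrs V E u)"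
proof -
  have finN: "finite (nbrs V E u)" using sg unfolding simple_graph_def nbrs_def by auto
  have sub: "L u - {\<phi> u} \<subseteq> \<phi> ` nbrs V E u" using fr unfolding frozen_def by force
  have c1: "card (L u - {\<phi> u}) \<ge> card (nbrs V E u)"
    using cd inL fin by (simp add: card_Diff_singleton deg_def)
  have c2: "card (\<phi> ` nbrs V E u) \<le> card (nbrs V E u)" using finN by (rule card_image_le)
  have c3: "card (L u - {\<phi> u}) \<le> card (\<phi> ` nbrs V E u)"
    using sub finN by (simp add: card_mono)
  have eq1: "card (\<phi> ` nbrs V E u) = card (nbrs V E u)" using c1 c2 c3 by linarith
  show "inj_on \<phi> (nbrs V E u)" using eq_card_imp_inj_on[OF finN eq1] .
  have "L u - {\<phi> u} = \<phi> ` nbrs V E u"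
    using card_subset_eq[OF finite_imageI[OF finN] sub] c1 c2 c3 by linarith
  then show "\<phi> ` nbrs V E u = L u - {\<phi> u}" by simp
qed

lemma multi:
  assumes sg: "simple_graph V E" and col: "L_colouring V E L \<psi>"
  shows "finite S \<Longrightarrow> S \<subseteq> V \<Longrightarrow>
    \<forall>y\<in>S. a \<in> L y \<and> \<psi> y \<noteq> a \<and> (\<forall>z\<in>V. E y z \<longrightarrow> \<psi> z \<noteq> a) \<Longrightarrow>
    \<forall>y1\<in>S. \<forall>y2\<in>S. \<not> E y1 y2 \<Longrightarrow>
    recol_seq V E L \<psi> (\<lambda>v. if v \<in> S then a else \<psi> v) (card S)"
proof (induction S rule: finite_induct)
  case empty
  then show ?case using col by (simp add: recol_seq.refl)
next
  case (insert y S)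
  let ?pS = "\<lambda>v. if v \<in> S then a else \<psi> v"
  have IH: "recol_seq V E L \<psi> ?pS (card S)" using insert by auto
  have colS: "L_colouring V E L ?pS" using recol_seq_end[OF IH] .
  have yV: "y \<in> V" using insert by auto
  have ha: "a \<in> L y" "\<psi> y \<noteq> a" "\<forall>z\<in>V. E y z \<longrightarrow> \<psi> z \<noteq> a" using insert by auto
  have indep: "\<forall>z\<in>S. \<not> E y z \<and> \<not> E z y" using insert by auto
  have symE: "\<And>u v. E u v \<Longrightarrow> E v u \<and> u \<noteq> v \<and> u \<in> V \<and> v \<in> V"
    using sg unfolding simple_graph_def by blast
  have eqf: "?pS(y := a) = (\<lambda>v. if v \<in> insert y S then a else \<psi> v)" by (rule ext) auto
  have colN: "L_colouring V E L (?pS(y := a))"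
    unfolding L_colouring_def
  proof (intro conjI ballI impI)
    fix v assume "v \<in> V" then show "(?pS(y := a)) v \<in> L v"
      using colS ha unfolding L_colouring_def by auto
  next
    fix u v assume uv: "u \<in> V" "v \<in> V" "E u v"
    show "(?pS(y := a)) u \<noteq> (?pS(y := a)) v"
    proof (cases "u = y")
      case True
      then have "v \<noteq> y" "v \<notin> S" using symE[OF uv(3)] indep by auto
      then show ?thesis using True ha uv by auto
    next
      case F: False
      show ?thesis
      proof (cases "v = y")
        case True
        then have "u \<notin> S" using symE[OF uv(3)] indep by auto
        then show ?thesis using True F ha uv symE[OF uv(3)] by auto
      next
        case False
        then show ?thesis using F colS uv unfolding L_colouring_def by auto
      qed
    qed
  qed
  have st: "recol_step V E L ?pS (?pS(y := a))"
    using step_intro[where L=L and \<phi>="?pS", OF yV ha(1) _ colN] ha(2) insert.hyps by simp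
  show ?case using recol_seq.step[OF IH st] eqf insert.hyps by simp
qed

lemma main:
  assumes sg: "simple_graph V E"
    and cards: "\<forall>u\<in>V. finite (L u) \<and> card (L u) \<ge> deg V E u + 1"
    and wV: "w \<in> V" and cL: "c \<in> L w"
  shows "L_colouring V E L \<phi> \<Longrightarrow> \<phi> w \<noteq> c \<Longrightarrow> card {x \<in> nbrs V E w. \<phi> x = c} = k \<Longrightarrow>
    \<exists>\<gamma> n. recol_seq V E L \<phi> \<gamma> n \<and>
      ((\<gamma> w = c \<and> n \<le> k + 2) \<or>
       ((\<exists>x. x \<in> nbrs V E w \<and> \<gamma> x = c \<and>
                 (\<forall>y\<in>nbrs V E w. \<gamma> y = c \<longrightarrow> y = x) \<and>
                 frozen V E L \<gamma> w \<and> frozen V E L \<gamma> x) \<and> n \<le> k))"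
proof (induction k arbitrary: \<phi> rule: less_induct)
  case (less k \<phi>)
  note col = less.prems(1) and pw = less.prems(2) and kdef = less.prems(3)
  have symE: "\<And>u v. E u v \<Longrightarrow> E v u \<and> u \<noteq> v \<and> u \<in> V \<and> v \<in> V"
    using sg unfolding simple_graph_def by blast
  have finV: "finite V" using sg unfolding simple_graph_def by blast
  define S where "S = {x \<in> nbrs V E w. \<phi> x = c}"
  have finS: "finite S" using finV unfolding S_def nbrs_def by auto
  have kS: "card S = k" using kdef S_def by simp
  have propr: "\<And>u v. E u v \<Longrightarrow> \<phi> u \<noteq> \<phi> v" using col symE unfolding L_colouring_def by blast
  have inL: "\<And>v. v \<in> V \<Longrightarrow> \<phi> v \<in> L v" using col unfolding L_colouring_def by blast
  show ?case
  proof (cases "\<exists>x\<in>S. \<not> frozen V E L \<phi> x")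
    case True
    then obtain x where x: "x \<in> S" "\<not> frozen V E L \<phi> x" by blast
    then obtain e where e: "e \<in> L x" "e \<noteq> \<phi> x" "\<forall>z\<in>nbrs V E x. \<phi> z \<noteq> e"
      unfolding frozen_def by blast
    have Ewx: "E w x" and xV: "x \<in> V" and xc: "\<phi> x = c" using x(1) unfolding S_def nbrs_def by auto
    define \<phi>' where "\<phi>' = \<phi>(x := e)"
    have col': "L_colouring V E L \<phi>'"
      unfolding L_colouring_def
    proof (intro conjI ballI impI)
      fix v assume "v \<in> V" then show "\<phi>' v \<in> L v" using inL e unfolding \<phi>'_def by auto
    next
      fix u v assume uv: "u \<in> V" "v \<in> V" "E u v"
      show "\<phi>' u \<noteq> \<phi>' v"
      proof (cases "u = x")
        case True
        then show ?thesis using symE[OF uv(3)] e(3) uv unfolding \<phi>'_def nbrs_def by auto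
      next
        case False
        then show ?thesis using symE[OF uv(3)] e(3) uv propr unfolding \<phi>'_def nbrs_def by auto
      qed
    qed
    have st: "recol_step V E L \<phi> \<phi>'" using step_intro[where L=L and \<phi>=\<phi>, OF xV e(1) e(2)] col' \<phi>'_def by simp
    have wx: "w \<noteq> x" using symE[OF Ewx] by auto
    have pw': "\<phi>' w \<noteq> c" using wx pw unfolding \<phi>'_def by simp
    have S': "{y \<in> nbrs V E w. \<phi>' y = c} = S - {x}"
      using e(2) xc unfolding S_def \<phi>'_def by auto
    have k1: "card (S - {x}) = k - 1" "k \<ge> 1" using kS x(1) finS
      by (auto simp: card_Diff_singleton card_gt_0_iff Suc_le_eq)
    have lt: "k - 1 < k" using k1 by simp
    obtain \<gamma> n where g: "recol_seq V E L \<phi>' \<gamma> n"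
      "(\<gamma> w = c \<and> n \<le> k - 1 + 2) \<or>
       ((\<exists>x. x \<in> nbrs V E w \<and> \<gamma> x = c \<and>
                 (\<forall>y\<in>nbrs V E w. \<gamma> y = c \<longrightarrow> y = x) \<and>
                 frozen V E L \<gamma> w \<and> frozen V E L \<gamma> x) \<and> n \<le> k - 1)"
      using less.IH[OF lt col' pw'] S' k1 by auto
    have r: "recol_seq V E L \<phi> \<gamma> (Suc n)" using recol_seq_prepend[OF g(1) st col] .
    have i1: "n \<le> k - 1 + 2 \<Longrightarrow> Suc n \<le> k + 2" and i2: "n \<le> k - 1 \<Longrightarrow> Suc n \<le> k" using k1 by auto
    have b: "(\<gamma> w = c \<and> Suc n \<le> k + 2) \<or>
       ((\<exists>x. x \<in> nbrs V E w \<and> \<gamma> x = c \<and>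
                 (\<forall>y\<in>nbrs V E w. \<gamma> y = c \<longrightarrow> y = x) \<and>
                 frozen V E L \<gamma> w \<and> frozen V E L \<gamma> x) \<and> Suc n \<le> k)"
      using g(2) i1 i2 by blast
    show ?thesis using r b by blast
  next
    case False
    then have frS: "\<forall>x\<in>S. frozen V E L \<phi> x" by blast
    show ?thesis
    proof (cases "S = {}")
      case True
      define \<chi> where "\<chi> = \<phi>(w := c)"
      have noc: "\<forall>z\<in>nbrs V E w. \<phi> z \<noteq> c" using True unfolding S_def by auto
      have colx: "L_colouring V E L \<chi>"
        unfolding L_colouring_def
      proof (intro conjI ballI impI)
        fix v assume "v \<in> V" then show "\<chi> v \<in> L v" using inL cL unfolding \<chi>_def by auto
      next
        fix u v assume uv: "u \<in> V" "v \<in> V" "E u v"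
        show "\<chi> u \<noteq> \<chi> v"
          using symE[OF uv(3)] noc uv propr[OF uv(3)] unfolding \<chi>_def nbrs_def by auto
      qed
      have st: "recol_step V E L \<phi> \<chi>" using step_intro[where L=L and \<phi>=\<phi>, OF wV cL] pw colx \<chi>_def by simp
      have r: "recol_seq V E L \<phi> \<chi> (Suc 0)" using recol_seq.step[OF recol_seq.refl[OF col] st] .
      have cw: "\<chi> w = c" by (simp add: \<chi>_def)
      have le: "Suc 0 \<le> k + 2" by simp
      show ?thesis using r cw le by blast
    next
      case False
      then obtain y where y: "y \<in> S" by blast
      have yN: "y \<in> nbrs V E w" and yc: "\<phi> y = c" using y unfolding S_def by auto
      show ?thesis
      proof (cases "frozen V E L \<phi> w")
        case True
        have inj: "inj_on \<phi> (nbrs V E w)"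
          using frozen_props(2)[OF sg wV _ _ inL[OF wV] True] cards wV by auto
        have "\<forall>z\<in>nbrs V E w. \<phi> z = c \<longrightarrow> z = y" using inj yN yc by (metis inj_on_def)
        moreover have "frozen V E L \<phi> y" using frS y by blast
        moreover have "recol_seq V E L \<phi> \<phi> 0" using recol_seq.refl[OF col] .
        moreover have "(0::nat) \<le> k" by simp
        ultimately show ?thesis using yN yc True by blast
      next
        case False
        then obtain d where d: "d \<in> L w" "d \<noteq> \<phi> w" "\<forall>z\<in>nbrs V E w. \<phi> z \<noteq> d"
          unfolding frozen_def by blast
        have dc: "d \<noteq> c" using d(3) yN yc by auto
        define \<psi> where "\<psi> = \<phi>(w := d)"
        have colp: "L_colouring V E L \<psi>"
          unfolding L_colouring_def
        proof (intro conjI ballI impI)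
          fix v assume "v \<in> V" then show "\<psi> v \<in> L v" using inL d unfolding \<psi>_def by auto
        next
          fix u v assume uv: "u \<in> V" "v \<in> V" "E u v"
          show "\<psi> u \<noteq> \<psi> v"
            using symE[OF uv(3)] d(3) uv propr[OF uv(3)] unfolding \<psi>_def nbrs_def by auto
        qed
        have st1: "recol_step V E L \<phi> \<psi>" using step_intro[where L=L and \<phi>=\<phi>, OF wV d(1) d(2)] colp \<psi>_def by simp
        have SV: "S \<subseteq> V" unfolding S_def nbrs_def by auto
        have wS: "w \<notin> S" using symE unfolding S_def nbrs_def by auto
        have conds: "\<forall>y\<in>S. \<phi> w \<in> L y \<and> \<psi> y \<noteq> \<phi> w \<and> (\<forall>z\<in>V. E y z \<longrightarrow> \<psi> z \<noteq> \<phi> w)"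
        proof
          fix y assume yS: "y \<in> S"
          have yV: "y \<in> V" and Ewy: "E w y" and ycc: "\<phi> y = c" using yS unfolding S_def nbrs_def by auto
          have fy: "frozen V E L \<phi> y" using frS yS by blast
          have im: "\<phi> ` nbrs V E y = L y - {\<phi> y}" and inj: "inj_on \<phi> (nbrs V E y)"
            using frozen_props[OF sg yV _ _ inL[OF yV] fy] cards yV by auto
          have wNy: "w \<in> nbrs V E y" using symE[OF Ewy] wV unfolding nbrs_def by auto
          have a1: "\<phi> w \<in> L y" using im wNy by auto
          have a2: "\<psi> y \<noteq> \<phi> w" using yS wS ycc pw unfolding \<psi>_def by auto
          have a3: "\<forall>z\<in>V. E y z \<longrightarrow> \<psi> z \<noteq> \<phi> w"
          proof (intro ballI impI)
            fix z assume z: "z \<in> V" "E y z"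
            show "\<psi> z \<noteq> \<phi> w"
            proof (cases "z = w")
              case True then show ?thesis using d(2) unfolding \<psi>_def by simp
            next
              case False
              have "z \<in> nbrs V E y" using z unfolding nbrs_def by auto
              then have "\<phi> z \<noteq> \<phi> w" using inj wNy False by (meson inj_on_def)
              then show ?thesis using False unfolding \<psi>_def by simp
            qed
          qed
          show "\<phi> w \<in> L y \<and> \<psi> y \<noteq> \<phi> w \<and> (\<forall>z\<in>V. E y z \<longrightarrow> \<psi> z \<noteq> \<phi> w)"
            using a1 a2 a3 by blast
        qed
        have indep: "\<forall>y1\<in>S. \<forall>y2\<in>S. \<not> E y1 y2"
        proof (intro ballI)
          fix y1 y2 assume "y1 \<in> S" "y2 \<in> S"
          then have "\<phi> y1 = \<phi> y2" unfolding S_def by simp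
          then show "\<not> E y1 y2" using propr by blast
        qed
        let ?pS = "\<lambda>v. if v \<in> S then \<phi> w else \<psi> v"
        have ms: "recol_seq V E L \<psi> ?pS (card S)"
          using multi[OF sg colp finS SV conds indep] .
        have s2: "recol_seq V E L \<phi> ?pS (Suc k)" using recol_seq_prepend[OF ms st1 col] kS by simp
        define \<chi> where "\<chi> = ?pS(w := c)"
        have colS: "L_colouring V E L ?pS" using recol_seq_end[OF ms] .
        have noc: "\<forall>z\<in>nbrs V E w. ?pS z \<noteq> c"
          using pw wS symE unfolding S_def \<psi>_def nbrs_def by auto
        have colx: "L_colouring V E L \<chi>"
          unfolding L_colouring_def
        proof (intro conjI ballI impI)
          fix v assume "v \<in> V" then show "\<chi> v \<in> L v" using colS cL unfolding \<chi>_def L_colouring_def by auto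
        next
          fix u v assume uv: "u \<in> V" "v \<in> V" "E u v"
          have "?pS u \<noteq> ?pS v" using colS uv unfolding L_colouring_def by blast
          then show "\<chi> u \<noteq> \<chi> v"
            using symE[OF uv(3)] noc uv unfolding \<chi>_def nbrs_def by auto
        qed
        have ne: "c \<noteq> ?pS w" using wS dc unfolding \<psi>_def by auto
        have st: "recol_step V E L ?pS \<chi>" using step_intro[where L=L and \<phi>="?pS", OF wV cL] ne colx \<chi>_def by simp
        have "recol_seq V E L \<phi> \<chi> (Suc (Suc k))" using recol_seq.step[OF s2 st] .
        moreover have "\<chi> w = c" by (simp add: \<chi>_def)
        moreover have "Suc (Suc k) \<le> k + 2" by simp
        ultimately show ?thesis by blast
      qed
    qed
  qed
qed

theorem mainTheorem6:
  fixes V :: "'v set" and E :: "'v \<Rightarrow> 'v \<Rightarrow> bool" and L :: "'v \<Rightarrow> 'c set"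
    and \<alpha> \<beta> :: "'v \<Rightarrow> 'c" and w :: 'v
  assumes "simple_graph V E" and "connected_graph V E"
    and "\<forall>u\<in>V. finite (L u) \<and> card (L u) \<ge> deg V E u + 1"
    and "L_colouring V E L \<alpha>" and "L_colouring V E L \<beta>"
    and "unfrozen_colouring V E L \<alpha>" and "unfrozen_colouring V E L \<beta>"
    and "w \<in> V"
  shows "\<exists>\<gamma> n. recol_seq V E L \<alpha> \<gamma> n \<and>
           (\<gamma> w = \<beta> w \<or>
            (\<exists>x. x \<in> nbrs V E w \<and> \<gamma> x = \<beta> w \<and>
                 (\<forall>y\<in>nbrs V E w. \<gamma> y = \<beta> w \<longrightarrow> y = x) \<and>
                 frozen V E L \<gamma> w \<and> frozen V E L \<gamma> x)) \<and>
           n \<le> deg V E w + 2 \<and> (n = deg V E w + 2 \<longrightarrow> \<gamma> w = \<beta> w)"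
proof (cases "\<alpha> w = \<beta> w")
  case True
  have "recol_seq V E L \<alpha> \<alpha> 0" using recol_seq.refl[OF assms(4)] .
  moreover have "(0::nat) \<le> deg V E w + 2" by simp
  ultimately show ?thesis using True by blast
next
  case False
  have cL: "\<beta> w \<in> L w" using assms(5,8) unfolding L_colouring_def by blast
  define k where "k = card {x \<in> nbrs V E w. \<alpha> x = \<beta> w}"
  have finN: "finite (nbrs V E w)" using assms(1) unfolding simple_graph_def nbrs_def by auto
  have kd: "k \<le> deg V E w" unfolding k_def deg_def by (rule card_mono[OF finN]) auto
  obtain \<gamma> n where g: "recol_seq V E L \<alpha> \<gamma> n"
      "(\<gamma> w = \<beta> w \<and> n \<le> k + 2) \<or>
       ((\<exists>x. x \<in> nbrs V E w \<and> \<gamma> x = \<beta> w \<and>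
                 (\<forall>y\<in>nbrs V E w. \<gamma> y = \<beta> w \<longrightarrow> y = x) \<and>
                 frozen V E L \<gamma> w \<and> frozen V E L \<gamma> x) \<and> n \<le> k)"
    using main[OF assms(1,3,8) cL assms(4) False k_def[symmetric]] by blast
  have d: "(\<gamma> w = \<beta> w \<and> n \<le> k + 2) \<or> n \<le> k" using g(2) by blast
  have n1: "n \<le> deg V E w + 2" using d kd by linarith
  have n2: "n = deg V E w + 2 \<longrightarrow> \<gamma> w = \<beta> w" using d kd by linarith
  have disj: "\<gamma> w = \<beta> w \<or>
            (\<exists>x. x \<in> nbrs V E w \<and> \<gamma> x = \<beta> w \<and>
                 (\<forall>y\<in>nbrs V E w. \<gamma> y = \<beta> w \<longrightarrow> y = x) \<and>
                 frozen V E L \<gamma> w \<and> frozen V E L \<gamma> x)" using g(2) by blast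
  show ?thesis using g(1) disj n1 n2 by blast
qed

end
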